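(* Let $(\mathrm{Con},\sqsubseteq,(s_i)_{i \in G})$ be a spatial constraint system and let $(\Delta_I)_{I \subseteq G}$ be its distributed spaces. Suppose that $(\mathrm{Con},\sqsubseteq)$ is completely distributive. Let $\delta^+_K:\mathrm{Con} \to \mathrm{Con}$, with $K\subseteq G$, be defined by \[ \delta^+_K(c) = \bigwedge\left\{ \bigsqcup_{k \in K} s_k(a_k) \;\middle|\; (a_k)_{k \in K} \in \mathrm{Con}^K \text{ and } \bigsqcup_{k \in K} a_k \sqsupseteq c \right\}. \] Then $\Delta_K = \delta^+_K$.
   Context: A constraint system is a complete lattice $(\mathrm{Con}, \sqsubseteq)$ with join $\sqcup$ (and $\bigsqcup$ for arbitrary joins), bottom $\mathit{true}$; $\bigwedge$ denotes the greatest lower bound (meet) of a set in $(\mathrm{Con},\sqsubseteq)$, and $c \sqsupseteq d$ means $d \sqsubseteq c$. A space function is a continuous self-map $f:\mathrm{Con}\to\mathrm{Con}$ (preserving joins of directed sets) with $f(\mathit{true})=\mathit{true}$ and $f(c \sqcup d) = f(c) \sqcup f(d)$. A spatial constraint system equips $\mathrm{Con}$ with a space function $s_i$ for each agent $i$ of a possibly infinite set $G$. Space functions are ordered pointwise: $f \sqsubseteq g$ iff $f(c) \sqsubseteq g(c)$ for all $c$; the set of space functions is a complete lattice under this order. The distributed space of a group $I \subseteq G$ is $\Delta_I = \max\{ f \text{ space function} \mid f \sqsubseteq s_i \text{ for every } i \in I\}$. $\mathrm{Con}^K$ is the set of functions $K \to \mathrm{Con}$. Complete distributivity: for any doubly indexed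 family $\{x_{ij}\}_{i\in I, j \in J_i}$, $\bigsqcup_{i\in I}\bigwedge_{j\in J_i} x_{ij} = \bigwedge_{f\in F}\bigsqcup_{i \in I} x_{i f(i)}$, with $F$ the choice functions $f(i)\in J_i$. *)

theory Defs
  imports Main
begin

definition directed :: "'a::order set \<Rightarrow> bool" where
  "directed D \<longleftrightarrow> D \<noteq> {} \<and> (\<forall>x\<in>D. \<forall>y\<in>D. \<exists>z\<in>D. x \<le> z \<and> y \<le> z)"

definition space_function :: "('a::complete_lattice \<Rightarrow> 'a) \<Rightarrow> bool" where
  "space_function f \<longleftrightarrow>
     (\<forall>D. directed D \<longrightarrow> f (Sup D) = Sup (f ` D)) \<and>
     f bot = bot \<and>
     (\<forall>c d. f (sup c d) = sup (f c) (f d))"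

definition spatial_cs :: "('g \<Rightarrow> 'a::complete_lattice \<Rightarrow> 'a) \<Rightarrow> bool" where
  "spatial_cs s \<longleftrightarrow> (\<forall>i. space_function (s i))"

definition distributed_space :: "('g \<Rightarrow> 'a::complete_lattice \<Rightarrow> 'a) \<Rightarrow> 'g set \<Rightarrow> 'a \<Rightarrow> 'a" where
  "distributed_space s I = (GREATEST f. space_function f \<and> (\<forall>i\<in>I. f \<le> s i))"

definition delta_plus :: "('g \<Rightarrow> 'a::complete_lattice \<Rightarrow> 'a) \<Rightarrow> 'g set \<Rightarrow> 'a \<Rightarrow> 'a" where
  "delta_plus s K c = Inf {(SUP k\<in>K. s k (a k)) | a. c \<le> (SUP k\<in>K. a k)}"

end

theory Submission
  imports Defs
begin

lemma sf_mono:
  assumes "space_function f" "x \<le> y" shows "f x \<le> f y"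
proof -
  have "f y = sup (f x) (f y)" using assms unfolding space_function_def
    by (metis sup.absorb2)
  thus ?thesis by (metis sup.cobounded1)
qed

lemma sf_fin:
  assumes "space_function f" "finite F" shows "f (Sup F) = Sup (f ` F)"
  using assms(2)
proof (induction F rule: finite_induct)
  case empty then show ?case using assms(1) unfolding space_function_def by simp
next
  case (insert x F) then show ?case using assms(1) unfolding space_function_def by simp
qed

lemma sf_Sup:
  fixes f :: "'a::complete_lattice \<Rightarrow> 'a"
  assumes sf: "space_function f" shows "f (Sup X) = Sup (f ` X)"
proof -
  define D where "D = Sup ` {F. finite F \<and> F \<subseteq> X}"
  have dir: "directed D" unfolding directed_def D_def
  proof (intro conjI ballI)
    show "Sup ` {F. finite F \<and> F \<subseteq> X} \<noteq> {}" by blast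
  next
    fix x y assume "x \<in> Sup ` {F. finite F \<and> F \<subseteq> X}" "y \<in> Sup ` {F. finite F \<and> F \<subseteq> X}"
    then obtain F1 F2 where F: "finite F1" "F1 \<subseteq> X" "x = Sup F1" "finite F2" "F2 \<subseteq> X" "y = Sup F2" by blast
    show "\<exists>z\<in>Sup ` {F. finite F \<and> F \<subseteq> X}. x \<le> z \<and> y \<le> z"
      by (rule bexI[of _ "Sup (F1 \<union> F2)"]) (use F in \<open>auto intro: Sup_subset_mono\<close>)
  qed
  have SD: "Sup D = Sup X"
  proof (rule order.antisym)
    show "Sup D \<le> Sup X" unfolding D_def by (rule SUP_least) (auto intro: Sup_subset_mono)
    show "Sup X \<le> Sup D"
    proof (rule Sup_least)
      fix x assume "x \<in> X"
      hence "Sup {x} \<in> D" unfolding D_def by blast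
      thus "x \<le> Sup D" by (metis Sup_upper ccpo_Sup_singleton)
    qed
  qed
  have "f (Sup X) = Sup (f ` D)" using sf dir SD unfolding space_function_def by metis
  also have "\<dots> = Sup (f ` X)"
  proof (rule order.antisym)
    show "Sup (f ` D) \<le> Sup (f ` X)"
      unfolding D_def
    proof (rule SUP_least)
      fix x assume "x \<in> Sup ` {F. finite F \<and> F \<subseteq> X}"
      then obtain F where F: "finite F" "F \<subseteq> X" "x = Sup F" by blast
      have "f x = Sup (f ` F)" using F sf_fin[OF sf] by simp
      also have "\<dots> \<le> Sup (f ` X)" using F(2) by (intro Sup_subset_mono) blast
      finally show "f x \<le> Sup (f ` X)" .
    qed
    show "Sup (f ` X) \<le> Sup (f ` D)"
    proof (rule SUP_least)
      fix x assume "x \<in> X"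
      hence "Sup {x} \<in> D" unfolding D_def by blast
      thus "f x \<le> Sup (f ` D)" by (metis SUP_upper ccpo_Sup_singleton)
    qed
  qed
  finally show ?thesis .
qed

lemma sf_SUP:
  fixes f :: "'a::complete_lattice \<Rightarrow> 'a"
  assumes "space_function f" shows "f (SUP k\<in>K. a k) = (SUP k\<in>K. f (a k))"
  using sf_Sup[OF assms, of "a ` K"] by (simp add: image_image)

lemma delta_le:
  assumes "c \<le> (SUP k\<in>K. a k)"
  shows "delta_plus s K c \<le> (SUP k\<in>K. s k (a k))"
  unfolding delta_plus_def by (rule Inf_lower) (use assms in blast)

lemma SUP_single:
  fixes x :: "'a::complete_lattice"
  assumes "i \<in> K" shows "(SUP k\<in>K. if k = i then x else bot) = x"
proof (rule order.antisym)
  show "(SUP k\<in>K. if k = i then x else bot) \<le> x" by (rule SUP_least) auto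
  show "x \<le> (SUP k\<in>K. if k = i then x else bot)"
    using SUP_upper[OF assms, of "\<lambda>k. if k = i then x else bot"] by simp
qed

theorem mainTheorem7:
  fixes s :: "'g \<Rightarrow> 'a::complete_distrib_lattice \<Rightarrow> 'a"
    and K :: "'g set"
  assumes "spatial_cs s"
  shows "distributed_space s K = delta_plus s K"
proof -
  have sfs: "\<And>i. space_function (s i)" using assms unfolding spatial_cs_def by blast
  have sbot: "\<And>i. s i bot = bot" using sfs unfolding space_function_def by blast
  have ssup: "\<And>i x y. s i (sup x y) = sup (s i x) (s i y)" using sfs unfolding space_function_def by blast
  let ?d = "delta_plus s K"
  have below: "?d \<le> s i" if "i \<in> K" for i
  proof (rule le_funI)
    fix c
    have "?d c \<le> (SUP k\<in>K. s k (if k = i then c else bot))"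
      by (rule delta_le, subst SUP_single[OF that], rule order_refl)
    also have "\<dots> = (SUP k\<in>K. if k = i then s i c else bot)"
      by (rule SUP_cong) (auto simp: sbot)
    also have "\<dots> = s i c" by (rule SUP_single[OF that])
    finally show "?d c \<le> s i c" .
  qed
  have greatest: "f \<le> ?d" if "space_function f" "\<forall>i\<in>K. f \<le> s i" for f
  proof (rule le_funI)
    fix c
    show "f c \<le> ?d c" unfolding delta_plus_def
    proof (rule Inf_greatest)
      fix x assume "x \<in> {(SUP k\<in>K. s k (a k)) | a. c \<le> (SUP k\<in>K. a k)}"
      then obtain a where a: "x = (SUP k\<in>K. s k (a k))" "c \<le> (SUP k\<in>K. a k)" by blast
      have "f c \<le> f (SUP k\<in>K. a k)" by (rule sf_mono[OF that(1) a(2)])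
      also have "\<dots> = (SUP k\<in>K. f (a k))" by (rule sf_SUP[OF that(1)])
      also have "\<dots> \<le> (SUP k\<in>K. s k (a k))"
        by (rule SUP_mono) (use that(2) in \<open>auto dest: le_funD\<close>)
      finally show "f c \<le> x" using a by simp
    qed
  qed
  have dmono: "?d c \<le> ?d d" if "c \<le> d" for c d
    unfolding delta_plus_def by (rule Inf_superset_mono) (use that in \<open>auto intro: order.trans\<close>)
  have dbot: "?d bot = bot"
  proof -
    have "?d bot \<le> (SUP k\<in>K. s k bot)" by (rule delta_le) simp
    thus ?thesis by (simp add: sbot bot_unique)
  qed
  have dsup: "?d (sup c d) = sup (?d c) (?d d)" for c d
  proof (rule order.antisym)
    show "sup (?d c) (?d d) \<le> ?d (sup c d)" by (simp add: dmono)
    show "?d (sup c d) \<le> sup (?d c) (?d d)"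
      unfolding delta_plus_def[of s K c] Inf_sup
    proof (rule INF_greatest)
      fix x assume "x \<in> {(SUP k\<in>K. s k (a k)) | a. c \<le> (SUP k\<in>K. a k)}"
      then obtain a where a: "x = (SUP k\<in>K. s k (a k))" "c \<le> (SUP k\<in>K. a k)" by blast
      show "?d (sup c d) \<le> sup x (?d d)"
        unfolding delta_plus_def[of s K d] sup_Inf
      proof (rule INF_greatest)
        fix y assume "y \<in> {(SUP k\<in>K. s k (a k)) | a. d \<le> (SUP k\<in>K. a k)}"
        then obtain b where b: "y = (SUP k\<in>K. s k (b k))" "d \<le> (SUP k\<in>K. b k)" by blast
        have "?d (sup c d) \<le> (SUP k\<in>K. s k (sup (a k) (b k)))"
          proof (rule delta_le)
          have "sup c d \<le> sup (SUP k\<in>K. a k) (SUP k\<in>K. b k)" using a(2) b(2) by (rule sup_mono)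
          thus "sup c d \<le> (SUP k\<in>K. sup (a k) (b k))" by (metis Complete_Lattices.SUP_sup_distrib)
        qed
        also have "\<dots> = sup x y" using a(1) b(1) by (simp add: ssup Complete_Lattices.SUP_sup_distrib)
        finally show "?d (sup c d) \<le> sup x y" .
      qed
    qed
  qed
  have dSup: "?d (Sup D) \<le> Sup (?d ` D)" for D
  proof -
    define A where "A = (\<lambda>c. {(SUP k\<in>K. s k (a k)) | a. c \<le> (SUP k\<in>K. a k)})"
    have "?d ` D = Inf ` (A ` D)" unfolding A_def delta_plus_def by (simp add: image_image)
    hence eq: "Sup (?d ` D) = Inf (Sup ` {f ` (A ` D) |f. \<forall>B\<in>A ` D. f B \<in> B})"
      by (simp add: Sup_Inf)
    show ?thesis unfolding eq
    proof (rule Inf_greatest)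
      fix z assume "z \<in> Sup ` {f ` (A ` D) |f. \<forall>B\<in>A ` D. f B \<in> B}"
      then obtain f where f: "z = Sup (f ` A ` D)" "\<forall>B\<in>A ` D. f B \<in> B" by blast
      have "\<forall>d\<in>D. \<exists>a. d \<le> (SUP k\<in>K. a k) \<and> f (A d) = (SUP k\<in>K. s k (a k))"
      proof
        fix d assume "d \<in> D"
        hence "f (A d) \<in> A d" using f(2) by blast
        thus "\<exists>a. d \<le> (SUP k\<in>K. a k) \<and> f (A d) = (SUP k\<in>K. s k (a k))"
          unfolding A_def by blast
      qed
      then obtain \<phi> where phi: "\<And>d. d \<in> D \<Longrightarrow> d \<le> (SUP k\<in>K. \<phi> d k) \<and> f (A d) = (SUP k\<in>K. s k (\<phi> d k))"
        by metis
      have "?d (Sup D) \<le> (SUP k\<in>K. s k (SUP d\<in>D. \<phi> d k))"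
      proof (rule delta_le)
        show "Sup D \<le> (SUP k\<in>K. SUP d\<in>D. \<phi> d k)"
        proof (rule Sup_least)
          fix d assume dD: "d \<in> D"
          have "d \<le> (SUP k\<in>K. \<phi> d k)" using phi[OF dD] by blast
          also have "\<dots> \<le> (SUP k\<in>K. SUP d\<in>D. \<phi> d k)"
            by (rule SUP_mono) (use dD in \<open>auto intro: SUP_upper\<close>)
          finally show "d \<le> (SUP k\<in>K. SUP d\<in>D. \<phi> d k)" .
        qed
      qed
      also have "\<dots> \<le> z"
      proof (rule SUP_least)
        fix k assume kK: "k \<in> K"
        have "s k (SUP d\<in>D. \<phi> d k) = (SUP d\<in>D. s k (\<phi> d k))" by (rule sf_SUP[OF sfs])
        also have "\<dots> \<le> z"
        proof (rule SUP_least)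
          fix d assume dD: "d \<in> D"
          have "s k (\<phi> d k) \<le> (SUP k\<in>K. s k (\<phi> d k))" by (rule SUP_upper[OF kK])
          also have "\<dots> = f (A d)" using phi[OF dD] by simp
          also have "\<dots> \<le> z" unfolding f(1) using dD by (auto intro: Sup_upper)
          finally show "s k (\<phi> d k) \<le> z" .
        qed
        finally show "s k (SUP d\<in>D. \<phi> d k) \<le> z" .
      qed
      finally show "?d (Sup D) \<le> z" .
    qed
  qed
  have dcont: "?d (Sup D) = Sup (?d ` D)" for D
    by (rule order.antisym[OF dSup]) (auto intro!: SUP_least dmono Sup_upper)
  have sfd: "space_function ?d" unfolding space_function_def
    using dcont dbot dsup by blast
  show ?thesis unfolding distributed_space_def
    by (rule Greatest_equality) (use sfd below greatest in auto)
qed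

end
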